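(* Let $k$ be a field of characteristic zero, $\lambda,\mu\in k$, ${\boldsymbol\lambda}=\begin{pmatrix}0&\lambda\\-\lambda&0\end{pmatrix}$ and ${\boldsymbol\mu}=\begin{pmatrix}0&\mu\\-\mu&0\end{pmatrix}$. Then $k_{\boldsymbol\lambda}(x_1,x_2)\cong k_{\boldsymbol\mu}(x_1,x_2)$ as Poisson algebras if and only if $\lambda=\pm\mu$.
   Context: For antisymmetric ${\boldsymbol\lambda}\in M_n(k)$, $k_{\boldsymbol\lambda}(x_1,\dots,x_n)$ is the rational function field $k(x_1,\dots,x_n)$ with the unique Poisson bracket satisfying $\{x_i,x_j\}=\lambda_{ij}x_ix_j$. *)

theory Defs
  imports "HOL-Computational_Algebra.Polynomial" "HOL-Computational_Algebra.Fraction_Field"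
begin

text \<open>The rational function field k(x1,x2) is the fraction field of k[x1][x2].\<close>
type_synonym 'a ratfun2 = "'a poly poly fract"

definition kconst :: "'a::idom \<Rightarrow> 'a ratfun2" where
  "kconst c = Fract ([:[:c:]:]) 1"

definition X1 :: "'a::idom ratfun2" where
  "X1 = Fract ([:[:0, 1:]:]) 1"

definition X2 :: "'a::idom ratfun2" where
  "X2 = Fract ([:0, 1:]) 1"

definition poisson_bracket :: "('a::field ratfun2 \<Rightarrow> 'a ratfun2 \<Rightarrow> 'a ratfun2) \<Rightarrow> bool" where
  "poisson_bracket B \<longleftrightarrow>
     (\<forall>a b c. B (a + b) c = B a c + B b c) \<and>
     (\<forall>r a b. B (kconst r * a) b = kconst r * B a b) \<and>
     (\<forall>a b. B a b = - B b a) \<and>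
     (\<forall>a b c. B a (B b c) + B b (B c a) + B c (B a b) = 0) \<and>
     (\<forall>a b c. B (a * b) c = a * B b c + B a c * b)"

text \<open>The Poisson bracket of k_lambda(x1,x2) for the antisymmetric matrix
  ((0, l), (-l, 0)): the (unique) Poisson bracket with {x1,x2} = l x1 x2.\<close>
definition quantum_bracket :: "'a::field \<Rightarrow> ('a ratfun2 \<Rightarrow> 'a ratfun2 \<Rightarrow> 'a ratfun2) \<Rightarrow> bool" where
  "quantum_bracket l B \<longleftrightarrow> poisson_bracket B \<and> B X1 X2 = kconst l * X1 * X2"

definition poisson_iso ::
  "('a::field ratfun2 \<Rightarrow> 'a ratfun2 \<Rightarrow> 'a ratfun2) \<Rightarrow> ('a ratfun2 \<Rightarrow> 'a ratfun2 \<Rightarrow> 'a ratfun2)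
    \<Rightarrow> ('a ratfun2 \<Rightarrow> 'a ratfun2) \<Rightarrow> bool" where
  "poisson_iso B C \<phi> \<longleftrightarrow>
     bij \<phi> \<and>
     (\<forall>a b. \<phi> (a + b) = \<phi> a + \<phi> b) \<and>
     (\<forall>a b. \<phi> (a * b) = \<phi> a * \<phi> b) \<and>
     \<phi> 1 = 1 \<and>
     (\<forall>r a. \<phi> (kconst r * a) = kconst r * \<phi> a) \<and>
     (\<forall>a b. \<phi> (B a b) = C (\<phi> a) (\<phi> b))"

end

theory Submission
  imports Defs "HOL-Library.Product_Lexorder" "HOL-Library.Product_Plus"
begin


lemma lex_add_mono: "(a::int\<times>int) \<le> b \<Longrightarrow> c \<le> d \<Longrightarrow> a + c \<le> b + d"
  by (cases a; cases b; cases c; cases d) auto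

lemma lex_add_right: "(a::int\<times>int) \<le> b \<Longrightarrow> a + c \<le> b + c"
  by (cases a; cases b; cases c) auto

lemma lex_less_iff: "(a::int\<times>int) < b \<longleftrightarrow> a + (0,1) \<le> b"
  by (cases a; cases b) auto

lemma lex_sum_eq: "(a::int\<times>int) \<le> x \<Longrightarrow> b \<le> y \<Longrightarrow> x + y = a + b \<Longrightarrow> x = a \<and> y = b"
  by (cases a; cases b; cases x; cases y) auto

lemma sum_single:
  "x \<in> A \<Longrightarrow> finite A \<Longrightarrow> (\<And>y. y \<in> A \<Longrightarrow> y \<noteq> x \<Longrightarrow> f y = 0) \<Longrightarrow> sum f A = f x"
  by (subst sum.remove[of A x]) (auto intro!: sum.neutral)

section \<open>Valuation on bivariate polynomials\<close>

definition coef2 :: "'a::zero poly poly \<Rightarrow> nat \<Rightarrow> nat \<Rightarrow> 'a" where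
  "coef2 P n i = coeff (coeff P n) i"

definition supp2 :: "'a::zero poly poly \<Rightarrow> (nat \<times> nat) set" where
  "supp2 P = {(n,i). coef2 P n i \<noteq> 0}"

definition ipair :: "nat \<times> nat \<Rightarrow> int \<times> int" where
  "ipair x = (int (fst x), int (snd x))"

definition vp :: "'a::zero poly poly \<Rightarrow> int \<times> int" where
  "vp P = Min (ipair ` supp2 P)"

definition gep :: "'a::zero poly poly \<Rightarrow> int \<times> int \<Rightarrow> bool" where
  "gep P w \<longleftrightarrow> (\<forall>x\<in>supp2 P. w \<le> ipair x)"

definition lcc :: "'a::zero poly poly \<Rightarrow> 'a" where
  "lcc P = coef2 P (nat (fst (vp P))) (nat (snd (vp P)))"

definition monoP :: "'a::zero \<Rightarrow> nat \<Rightarrow> nat \<Rightarrow> 'a poly poly" where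
  "monoP c n i = monom (monom c i) n"

lemma finite_supp2: "finite (supp2 P)"
proof -
  have "supp2 P \<subseteq> Sigma {..degree P} (\<lambda>n. {..degree (coeff P n)})"
    by (auto simp: supp2_def coef2_def intro: le_degree)
  then show ?thesis by (rule finite_subset) auto
qed

lemma supp2_empty_iff: "supp2 P = {} \<longleftrightarrow> P = 0"
proof
  assume "supp2 P = {}"
  then have "\<forall>n i. coeff (coeff P n) i = 0" by (auto simp: supp2_def coef2_def)
  then show "P = 0" by (simp add: poly_eq_iff)
qed (simp add: supp2_def coef2_def)

lemma vp_mem: "P \<noteq> 0 \<Longrightarrow> vp P \<in> ipair ` supp2 P"
  unfolding vp_def using finite_supp2 supp2_empty_iff by (intro Min_in) auto

lemma vp_le: "x \<in> supp2 P \<Longrightarrow> vp P \<le> ipair x"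
  unfolding vp_def using finite_supp2 by (intro Min_le) auto

lemma lcc_nz: assumes "P \<noteq> 0" shows "lcc P \<noteq> 0"
  and "vp P = ipair (nat (fst (vp P)), nat (snd (vp P)))"
proof -
  from vp_mem[OF assms] obtain n i where "(n,i) \<in> supp2 P" "vp P = ipair (n,i)" by auto
  then show "lcc P \<noteq> 0" "vp P = ipair (nat (fst (vp P)), nat (snd (vp P)))"
    by (auto simp: lcc_def ipair_def supp2_def)
qed

lemma gep_iff: "gep P w \<longleftrightarrow> P = 0 \<or> w \<le> vp P"
proof
  assume g: "gep P w"
  show "P = 0 \<or> w \<le> vp P"
  proof (cases "P = 0")
    case False
    from vp_mem[OF this] obtain x where "x \<in> supp2 P" "vp P = ipair x" by auto
    then show ?thesis using g by (auto simp: gep_def)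
  qed simp
next
  assume "P = 0 \<or> w \<le> vp P"
  then show "gep P w"
    by (auto simp: gep_def supp2_empty_iff[symmetric] intro: order_trans vp_le)
qed

lemma gep_vp: "gep P (vp P)" by (simp add: gep_iff)

lemma gep_add: "gep P w \<Longrightarrow> gep Q w \<Longrightarrow> gep (P + Q) w"
  unfolding gep_def supp2_def coef2_def by clarsimp (metis add.right_neutral)

lemma gep_uminus: "gep P w \<Longrightarrow> gep (- P) w"
  by (auto simp: gep_def supp2_def coef2_def)

lemma gep_diff: "gep P w \<Longrightarrow> gep Q w \<Longrightarrow> gep (P - Q) w"
  unfolding gep_def supp2_def coef2_def by clarsimp (metis diff_zero)

lemma gep_mono: "gep P w \<Longrightarrow> w' \<le> w \<Longrightarrow> gep P w'"
  by (auto simp: gep_def intro: order_trans)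

lemma coef2_mult: "coef2 (P * Q) N I =
   (\<Sum>j\<le>N. \<Sum>k\<le>I. coef2 P j k * coef2 Q (N - j) (I - k))"
  by (simp add: coef2_def coeff_mult coeff_sum)

lemma coef2_mult_nz:
  fixes P Q :: "'a::idom poly poly"
  assumes "coef2 (P * Q) N I \<noteq> 0"
  shows "\<exists>j k. j \<le> N \<and> k \<le> I \<and> coef2 P j k \<noteq> 0 \<and> coef2 Q (N - j) (I - k) \<noteq> 0"
proof (rule ccontr)
  assume "\<not> ?thesis"
  then have H: "\<And>j k. j \<le> N \<Longrightarrow> k \<le> I \<Longrightarrow> coef2 P j k * coef2 Q (N - j) (I - k) = 0" by (metis mult_eq_0_iff)
  have "coef2 (P * Q) N I = 0" unfolding coef2_mult by (intro sum.neutral ballI H) auto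
  with assms show False by simp
qed

lemma gep_mult: fixes P Q :: "'a::idom poly poly" assumes "gep P a" "gep Q b" shows "gep (P * Q) (a + b)"
  unfolding gep_def
proof
  fix x assume "x \<in> supp2 (P * Q)"
  then obtain N I where x: "x = (N, I)" "coef2 (P * Q) N I \<noteq> 0" by (auto simp: supp2_def)
  from coef2_mult_nz[OF x(2)] obtain j k where jk: "j \<le> N" "k \<le> I" "coef2 P j k \<noteq> 0"
    "coef2 Q (N - j) (I - k) \<noteq> 0" by blast
  then have "a \<le> ipair (j,k)" "b \<le> ipair (N - j, I - k)"
    using assms by (auto simp: gep_def supp2_def)
  then have "a + b \<le> ipair (j,k) + ipair (N - j, I - k)" by (rule lex_add_mono)
  also have "\<dots> = ipair x" using jk x by (simp add: ipair_def of_nat_diff)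
  finally show "a + b \<le> ipair x" .
qed

lemma coef2_lead_mult:
  fixes P Q :: "'a::idom poly poly"
  assumes P: "P \<noteq> 0" and Q: "Q \<noteq> 0"
  defines "n1 \<equiv> nat (fst (vp P))" and "i1 \<equiv> nat (snd (vp P))"
    and "n2 \<equiv> nat (fst (vp Q))" and "i2 \<equiv> nat (snd (vp Q))"
  shows "coef2 (P * Q) (n1 + n2) (i1 + i2) = lcc P * lcc Q"
proof -
  have vP: "vp P = ipair (n1, i1)" and vQ: "vp Q = ipair (n2, i2)"
    using lcc_nz(2)[OF P] lcc_nz(2)[OF Q] by (simp_all add: n1_def i1_def n2_def i2_def)
  have key: "j = n1 \<and> k = i1" if "j \<le> n1 + n2" "k \<le> i1 + i2" "coef2 P j k \<noteq> 0"
     "coef2 Q (n1 + n2 - j) (i1 + i2 - k) \<noteq> 0" for j k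
  proof -
    have "vp P \<le> ipair (j,k)" "vp Q \<le> ipair (n1 + n2 - j, i1 + i2 - k)"
      using that by (auto intro!: vp_le simp: supp2_def)
    moreover have "ipair (j,k) + ipair (n1 + n2 - j, i1 + i2 - k) = vp P + vp Q"
      using that vP vQ by (simp add: ipair_def of_nat_diff)
    ultimately have "ipair (j,k) = vp P" by (blast dest: lex_sum_eq)
    then show ?thesis using vP by (simp add: ipair_def)
  qed
  have "coef2 (P * Q) (n1 + n2) (i1 + i2) =
     (\<Sum>j\<le>n1 + n2. \<Sum>k\<le>i1 + i2. coef2 P j k * coef2 Q (n1 + n2 - j) (i1 + i2 - k))"
    by (rule coef2_mult)
  also have "\<dots> = (\<Sum>k\<le>i1 + i2. coef2 P n1 k * coef2 Q (n1 + n2 - n1) (i1 + i2 - k))"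
    by (rule sum_single) (auto intro!: sum.neutral dest: key)
  also have "\<dots> = coef2 P n1 i1 * coef2 Q (n1 + n2 - n1) (i1 + i2 - i1)"
    by (rule sum_single) (use key[of n1] in auto)
  also have "\<dots> = lcc P * lcc Q" by (simp add: lcc_def n1_def i1_def n2_def i2_def)
  finally show ?thesis .
qed


lemma vp_mult:
  fixes P Q :: "'a::idom poly poly"
  assumes P: "P \<noteq> 0" and Q: "Q \<noteq> 0"
  shows "vp (P * Q) = vp P + vp Q"
proof -
  have PQ: "P * Q \<noteq> 0" using P Q by simp
  have "gep (P * Q) (vp P + vp Q)" by (intro gep_mult gep_vp)
  then have 1: "vp P + vp Q \<le> vp (P * Q)" using PQ by (simp add: gep_iff)
  define n1 i1 n2 i2 where "n1 = nat (fst (vp P))" "i1 = nat (snd (vp P))"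
    "n2 = nat (fst (vp Q))" "i2 = nat (snd (vp Q))"
  have "coef2 (P * Q) (n1 + n2) (i1 + i2) \<noteq> 0"
    using coef2_lead_mult[OF P Q] lcc_nz(1)[OF P] lcc_nz(1)[OF Q] by (simp add: n1_i1_n2_i2_def)
  then have "vp (P * Q) \<le> ipair (n1 + n2, i1 + i2)" by (intro vp_le) (simp add: supp2_def)
  also have "\<dots> = vp P + vp Q"
    using lcc_nz(2)[OF P] lcc_nz(2)[OF Q] by (simp add: n1_i1_n2_i2_def ipair_def prod_eq_iff)
  finally show ?thesis using 1 by simp
qed

lemma coef2_diff [simp]: "coef2 (P - Q) n i = coef2 P n i - coef2 Q n i"
  by (simp add: coef2_def)

lemma coef2_monoP: "coef2 (monoP c n i) n' i' = (if n' = n \<and> i' = i then c else 0)"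
  by (auto simp: coef2_def monoP_def)

lemma lead_poly:
  fixes P :: "'a::idom poly poly"
  assumes P: "P \<noteq> 0"
  shows "gep (P - monoP (lcc P) (nat (fst (vp P))) (nat (snd (vp P)))) (vp P + (0,1))"
  unfolding gep_def
proof
  fix x assume x: "x \<in> supp2 (P - monoP (lcc P) (nat (fst (vp P))) (nat (snd (vp P))))"
  obtain n i where xe: "x = (n, i)" by (cases x)
  have v: "vp P = ipair (nat (fst (vp P)), nat (snd (vp P)))" by (rule lcc_nz(2)[OF P])
  show "vp P + (0,1) \<le> ipair x"
  proof (cases "(n, i) = (nat (fst (vp P)), nat (snd (vp P)))")
    case True
    then show ?thesis using x xe by (simp add: supp2_def coef2_monoP lcc_def)
  next
    case False
    then have "coef2 P n i \<noteq> 0" using x xe by (auto simp: supp2_def coef2_monoP)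
    then have "vp P \<le> ipair (n, i)" by (intro vp_le) (simp add: supp2_def)
    moreover have "vp P \<noteq> ipair (n, i)" using v False by (auto simp: ipair_def)
    ultimately have "vp P < ipair (n, i)" by simp
    then show ?thesis using xe lex_less_iff by simp
  qed
qed

lemma gep_monoP: "gep (monoP c n i) (int n, int i)"
  by (auto simp: gep_def supp2_def coef2_monoP ipair_def)

lemma monoP_eq: "monoP (c::'a::comm_ring_1) n i = [:[:c:]:] * [:[:0,1:]:] ^ i * [:0,1:] ^ n"
proof -
  have "[:[:0,1:]:] ^ i = [:monom (1::'a) i:]" by (simp add: poly_const_pow monom_altdef)
  moreover have "[:0,1:] ^ n = monom (1 :: 'a poly) n" by (simp add: monom_altdef)
  ultimately show ?thesis
    by (simp add: monoP_def smult_monom monom_altdef)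
qed


definition emb :: "'a::idom poly poly \<Rightarrow> 'a ratfun2" where "emb P = Fract P 1"

lemma emb_mult [simp]: "emb (P * Q) = emb P * emb Q" by (simp add: emb_def)
lemma emb_add [simp]: "emb (P + Q) = emb P + emb Q" by (simp add: emb_def)
lemma emb_uminus [simp]: "emb (- P) = - emb P" by (simp add: emb_def)
lemma emb_diff [simp]: "emb (P - Q) = emb P - emb Q" by (simp add: emb_def)
lemma emb_0 [simp]: "emb 0 = 0" by (simp add: emb_def fract_collapse)
lemma emb_1 [simp]: "emb 1 = 1" by (simp add: emb_def fract_collapse)
lemma emb_eq_0_iff [simp]: "emb P = 0 \<longleftrightarrow> P = 0"
  by (simp add: emb_def Zero_fract_def eq_fract)
lemma emb_power [simp]: "emb (P ^ n) = emb P ^ n" by (induct n) simp_all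
lemma emb_sum: "emb (sum f A) = (\<Sum>x\<in>A. emb (f x))"
  by (induct A rule: infinite_finite_induct) simp_all
lemma Fract_emb: "Q \<noteq> 0 \<Longrightarrow> Fract P Q = emb P / emb Q"
  by (simp add: emb_def divide_fract_def)

definition monoF :: "'a::idom \<Rightarrow> nat \<Rightarrow> nat \<Rightarrow> 'a ratfun2" where
  "monoF c n i = kconst c * X1 ^ i * X2 ^ n"

lemma emb_monoP: "emb (monoP c n i) = monoF (c::'a::idom) n i"
  unfolding monoP_eq emb_mult emb_power by (simp add: monoF_def kconst_def X1_def X2_def emb_def)

definition vf :: "'a::idom ratfun2 \<Rightarrow> int \<times> int" where
  "vf f = (SOME w. \<exists>P Q. P \<noteq> 0 \<and> Q \<noteq> 0 \<and> f = Fract P Q \<and> w = vp P - vp Q)"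

definition gef :: "'a::idom ratfun2 \<Rightarrow> int \<times> int \<Rightarrow> bool" where
  "gef f w \<longleftrightarrow> f = 0 \<or> w \<le> vf f"

lemma vf_Fract:
  assumes "P \<noteq> 0" "Q \<noteq> 0"
  shows "vf (Fract P Q) = vp P - vp Q"
proof -
  have uniq: "w = vp P - vp Q" if "P' \<noteq> 0" "Q' \<noteq> 0" "Fract P Q = Fract P' Q'" "w = vp P' - vp Q'"
    for P' Q' w
  proof -
    have "P * Q' = P' * Q" using that assms by (simp add: eq_fract)
    then have "vp (P * Q') = vp (P' * Q)" by simp
    then have "vp P + vp Q' = vp P' + vp Q" using that assms by (simp add: vp_mult)
    then show ?thesis using that by (simp add: algebra_simps) (metis add_diff_cancel_right' add.commute diff_diff_eq2)
  qed
  show ?thesis unfolding vf_def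
    by (rule someI2[of _ "vp P - vp Q"]) (use assms uniq in blast)+
qed

lemma lex_le_diff: "(w::int\<times>int) \<le> a - b \<longleftrightarrow> w + b \<le> a"
  by (cases w; cases a; cases b) auto

lemma gef_Fract:
  assumes Q: "Q \<noteq> 0"
  shows "gef (Fract P Q) w \<longleftrightarrow> gep P (w + vp Q)"
proof (cases "P = 0")
  case True then show ?thesis by (simp add: gef_def gep_iff fract_collapse)
next
  case False
  then have "Fract P Q \<noteq> 0" using Q by (simp add: Zero_fract_def eq_fract)
  then show ?thesis using False Q by (simp add: gef_def gep_iff vf_Fract lex_le_diff)
qed

lemma gef_0 [simp]: "gef 0 w" by (simp add: gef_def)

lemma gef_vf: "gef f (vf f)" by (simp add: gef_def)

lemma gef_mono: "gef f w \<Longrightarrow> w' \<le> w \<Longrightarrow> gef f w'"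
  by (auto simp: gef_def)

lemma gef_add:
  assumes "gef f w" "gef g w" shows "gef (f + g) w"
proof -
  obtain P Q where f: "f = Fract P Q" "Q \<noteq> 0" by (cases f)
  obtain R S where g: "g = Fract R S" "S \<noteq> 0" by (cases g)
  have "gep P (w + vp Q)" "gep R (w + vp S)" using assms f g by (simp_all add: gef_Fract)
  then have "gep (P * S) (w + vp Q + vp S)" "gep (R * Q) (w + vp S + vp Q)"
    by (auto intro: gep_mult gep_vp)
  then have "gep (P * S + R * Q) (w + vp (Q * S))"
    using f g by (intro gep_add) (simp_all add: vp_mult algebra_simps)
  then show ?thesis using f g by (simp add: gef_Fract)
qed

lemma gef_uminus: "gef f w \<Longrightarrow> gef (- f) w"
  by (cases f) (simp add: gef_Fract gep_uminus)

lemma gef_diff: "gef f w \<Longrightarrow> gef g w \<Longrightarrow> gef (f - g) w"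
  using gef_add[of f w "- g"] gef_uminus[of g w] by simp

lemma gef_mult:
  assumes "gef f a" "gef g b" shows "gef (f * g) (a + b)"
proof -
  obtain P Q where f: "f = Fract P Q" "Q \<noteq> 0" by (cases f)
  obtain R S where g: "g = Fract R S" "S \<noteq> 0" by (cases g)
  have "gep P (a + vp Q)" "gep R (b + vp S)" using assms f g by (simp_all add: gef_Fract)
  then have "gep (P * R) (a + vp Q + (b + vp S))" by (rule gep_mult)
  then show ?thesis using f g by (simp add: gef_Fract vp_mult algebra_simps)
qed

lemma vf_mult:
  assumes "f \<noteq> 0" "g \<noteq> 0" shows "vf (f * g) = vf f + vf g"
proof -
  obtain P Q where f: "f = Fract P Q" "Q \<noteq> 0" "P \<noteq> 0" using assms(1) by (cases f rule: Fract_cases_nonzero) auto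
  obtain R S where g: "g = Fract R S" "S \<noteq> 0" "R \<noteq> 0" using assms(2) by (cases g rule: Fract_cases_nonzero) auto
  show ?thesis using f g by (simp add: vf_Fract vp_mult)
qed

lemma vf_inverse:
  assumes "f \<noteq> 0" shows "vf (inverse f) = - vf f"
proof -
  obtain P Q where f: "f = Fract P Q" "Q \<noteq> 0" "P \<noteq> 0" using assms(1) by (cases f rule: Fract_cases_nonzero) auto
  show ?thesis using f by (simp add: vf_Fract)
qed

lemma gef_divide:
  assumes "gef f w" "g \<noteq> 0" shows "gef (f / g) (w - vf g)"
proof -
  have "gef (inverse g) (- vf g)" using assms(2) vf_inverse[of g] gef_vf[of "inverse g"] by simp
  from gef_mult[OF assms(1) this] show ?thesis by (simp add: divide_inverse)
qed

lemma gef_strict_nz: "f \<noteq> 0 \<Longrightarrow> \<not> gef f (vf f + (0,1))"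
  by (cases "vf f") (simp add: gef_def)

lemma vp_one [simp]: "vp (1 :: 'a::idom poly poly) = 0"
proof -
  have "supp2 (1 :: 'a poly poly) = {(0,0)}"
    by (auto simp: supp2_def coef2_def coeff_1 of_bool_def split: if_splits)
  then show ?thesis by (simp add: vp_def ipair_def zero_prod_def)
qed

lemma gef_emb: "gef (emb P) w \<longleftrightarrow> gep P w"
  by (simp add: emb_def gef_Fract)

lemma vf_emb: "P \<noteq> 0 \<Longrightarrow> vf (emb P) = vp P"
  by (simp add: emb_def vf_Fract)

lemma gef_monoF: "gef (monoF c n i) (int n, int i)"
  using gef_emb[of "monoP c n i"] gep_monoP by (simp add: emb_monoP)

lemma vf_monoF: assumes "c \<noteq> 0" shows "monoF c n i \<noteq> 0" "vf (monoF c n i) = (int n, int i)"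
proof -
  have nz: "monoP c n i \<noteq> 0" using assms by (simp add: monoP_def)
  then show "monoF c n i \<noteq> 0" by (simp flip: emb_monoP)
  have "vp (monoP c n i) \<le> ipair (n, i)" by (rule vp_le) (simp add: supp2_def coef2_monoP assms)
  moreover have "(int n, int i) \<le> vp (monoP c n i)" using gep_monoP[of c n i] nz by (simp add: gep_iff)
  ultimately show "vf (monoF c n i) = (int n, int i)"
    using nz by (simp add: vf_emb flip: emb_monoP) (simp add: ipair_def)
qed


lemma lead_monoF:
  fixes P :: "'a::idom poly poly"
  assumes P: "P \<noteq> 0"
  defines "t \<equiv> monoF (lcc P) (nat (fst (vp P))) (nat (snd (vp P)))"
  shows "t \<noteq> 0" "vf t = vp P" "gef (emb P - t) (vp P + (0,1))" "gef t (vp P)"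
proof -
  have v: "vp P = ipair (nat (fst (vp P)), nat (snd (vp P)))" by (rule lcc_nz(2)[OF P])
  show "t \<noteq> 0" using lcc_nz(1)[OF P] by (simp add: t_def vf_monoF)
  show "vf t = vp P" using lcc_nz(1)[OF P] v by (simp add: t_def vf_monoF ipair_def)
  show "gef (emb P - t) (vp P + (0,1))"
    using lead_poly[OF P] by (simp add: t_def gef_emb flip: emb_monoP emb_diff)
  have "gef t (ipair (nat (fst (vp P)), nat (snd (vp P))))" using gef_monoF[of "lcc P" "nat (fst (vp P))" "nat (snd (vp P))"]
    by (simp only: t_def ipair_def fst_conv snd_conv)
  then show "gef t (vp P)" by (subst v)
qed

lemma lead_frac:
  fixes f :: "'a::idom ratfun2"
  assumes "f \<noteq> 0"
  shows "\<exists>c n i c' n' i'. c \<noteq> 0 \<and> c' \<noteq> 0 \<and> vf (monoF c n i / monoF c' n' i') = vf f \<and>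
           gef (f - monoF c n i / monoF c' n' i') (vf f + (0,1))"
proof -
  obtain P Q where f: "f = Fract P Q" "Q \<noteq> 0" "P \<noteq> 0" using assms by (cases f rule: Fract_cases_nonzero) auto
  define tP where "tP = monoF (lcc P) (nat (fst (vp P))) (nat (snd (vp P)))"
  define tQ where "tQ = monoF (lcc Q) (nat (fst (vp Q))) (nat (snd (vp Q)))"
  note LP = lead_monoF[OF f(3), folded tP_def]
  note LQ = lead_monoF[OF f(2), folded tQ_def]
  have vff: "vf f = vp P - vp Q" using f by (simp add: vf_Fract)
  have fe: "f = emb P / emb Q" using f by (simp add: Fract_emb)
  have eQ: "emb Q \<noteq> 0" using f by simp
  have vt: "vf (tP / tQ) = vf f"
    using LP LQ by (simp add: divide_inverse vf_mult vf_inverse vff)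
  have num: "emb P * tQ - tP * emb Q = (emb P - tP) * tQ - tP * (emb Q - tQ)"
    by (simp add: algebra_simps)
  have g1: "gef ((emb P - tP) * tQ) (vp P + (0,1) + vp Q)" using LP LQ by (intro gef_mult)
  have g2: "gef (tP * (emb Q - tQ)) (vp P + (vp Q + (0,1)))" using LP LQ by (intro gef_mult)
  have "gef (emb P * tQ - tP * emb Q) (vp P + vp Q + (0,1))"
    unfolding num by (rule gef_diff) (use g1 g2 in \<open>simp_all add: algebra_simps\<close>)
  then have G: "gef ((emb P * tQ - tP * emb Q) / (emb Q * tQ)) (vp P + vp Q + (0,1) - vf (emb Q * tQ))"
    using eQ LQ by (intro gef_divide) auto
  have V: "vf (emb Q * tQ) = vp Q + vp Q" using eQ LQ f by (simp add: vf_mult vf_emb)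
  have E: "f - tP / tQ = (emb P * tQ - tP * emb Q) / (emb Q * tQ)"
    using eQ LQ by (simp add: fe field_simps)
  have W: "vp P + vp Q + (0,1) - vf (emb Q * tQ) = vf f + (0,1)" unfolding V vff by (simp add: algebra_simps)
  have "gef (f - tP / tQ) (vf f + (0,1))" using G unfolding E W .
  then show ?thesis using vt lcc_nz(1)[OF f(3)] lcc_nz(1)[OF f(2)] unfolding tP_def tQ_def by blast
qed


lemma coef2_sum: "coef2 (sum f A) n i = (\<Sum>x\<in>A. coef2 (f x) n i)"
  by (simp add: coef2_def coeff_sum)

lemma poly_monoP_sum:
  "P = (\<Sum>x\<in>supp2 P. monoP (coef2 P (fst x) (snd x)) (fst x) (snd x))"
proof -
  have H: "coeff (coeff P n) i = coeff (coeff (\<Sum>x\<in>supp2 P. monoP (coef2 P (fst x) (snd x)) (fst x) (snd x)) n) i" for n i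
  proof -
    have "coef2 (\<Sum>x\<in>supp2 P. monoP (coef2 P (fst x) (snd x)) (fst x) (snd x)) n i
        = (\<Sum>x\<in>supp2 P. if x = (n, i) then coef2 P n i else 0)"
      unfolding coef2_sum by (intro sum.cong) (auto simp: coef2_monoP)
    also have "\<dots> = coef2 P n i"
      using finite_supp2[of P] by (simp add: sum.delta' supp2_def)
    finally show ?thesis by (metis coef2_def)
  qed
  show ?thesis by (intro poly_eqI) (rule H)
qed

lemma emb_monoF_sum:
  "emb P = (\<Sum>x\<in>supp2 P. monoF (coef2 P (fst x) (snd x)) (fst x) (snd x))"
  by (subst poly_monoP_sum) (simp add: emb_sum emb_monoP)

lemma kconst_emb: "kconst c = emb [:[:c:]:]" by (simp add: kconst_def emb_def)
lemma kconst_add: "kconst (a + b) = kconst a + kconst b" by (simp add: kconst_def)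
lemma kconst_mult: "kconst (a * b) = kconst a * kconst b" by (simp add: kconst_def)
lemma kconst_1 [simp]: "kconst 1 = 1" by (simp add: kconst_emb pCons_one)
lemma kconst_0 [simp]: "kconst 0 = 0" by (simp add: kconst_emb)
lemma kconst_uminus: "kconst (- a) = - kconst a" by (simp add: kconst_def)
lemma kconst_diff: "kconst (a - b) = kconst a - kconst b" by (simp add: kconst_def)
lemma kconst_eq_0_iff [simp]: "kconst c = 0 \<longleftrightarrow> c = 0" by (simp add: kconst_emb)
lemma kconst_of_nat: "kconst (of_nat n) = of_nat n" by (induct n) (simp_all add: kconst_add)
lemma kconst_of_int: "kconst (of_int z) = of_int z"
  by (cases z rule: int_cases) (simp_all add: kconst_of_nat kconst_uminus kconst_diff)

lemma gef_kconst: "gef (kconst c) 0"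
proof -
  have "gep [:[:c:]:] 0" by (auto simp: gep_def supp2_def coef2_def ipair_def zero_prod_def coeff_pCons split: nat.splits)
  then show ?thesis by (simp add: kconst_emb gef_emb)
qed

lemma gef_sum: "(\<And>x. x \<in> A \<Longrightarrow> gef (f x) w) \<Longrightarrow> gef (sum f A) w"
  by (induct A rule: infinite_finite_induct) (auto intro: gef_add)

lemma X1_nz [simp]: "X1 \<noteq> 0" by (simp add: X1_def Zero_fract_def eq_fract)
lemma X2_nz [simp]: "X2 \<noteq> 0" by (simp add: X2_def Zero_fract_def eq_fract)

context
  fixes B :: "'a::field_char_0 ratfun2 \<Rightarrow> 'a ratfun2 \<Rightarrow> 'a ratfun2"
  assumes pb: "poisson_bracket B"
begin

lemma B_add_left: "B (a + b) c = B a c + B b c" using pb unfolding poisson_bracket_def by blast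
lemma B_smult: "B (kconst r * a) b = kconst r * B a b" using pb unfolding poisson_bracket_def by blast
lemma B_antisym: "B a b = - B b a" using pb unfolding poisson_bracket_def by blast
lemma B_leib: "B (a * b) c = a * B b c + B a c * b" using pb unfolding poisson_bracket_def by blast

lemma B_add_right: "B c (a + b) = B c a + B c b"
proof -
  have "B c (a + b) = - B (a + b) c" by (rule B_antisym)
  also have "\<dots> = - B a c - B b c" by (simp add: B_add_left)
  also have "\<dots> = B c a + B c b" using B_antisym[of c a] B_antisym[of c b] by simp
  finally show ?thesis .
qed

lemma B_leib_right: "B a (b * c) = b * B a c + B a b * c"
proof -
  have "B a (b * c) = - B (b * c) a" by (rule B_antisym)
  also have "\<dots> = - (b * B c a + B b a * c)" by (simp add: B_leib)
  also have "\<dots> = b * B a c + B a b * c" using B_antisym[of a c] B_antisym[of a b] by simp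
  finally show ?thesis .
qed

lemma B_zero_left [simp]: "B 0 c = 0"
  using B_add_left[of 0 0 c] by (metis add_0 add_cancel_right_right)
lemma B_zero_right [simp]: "B c 0 = 0"
  using B_add_right[of c 0 0] by (metis add_0 add_cancel_right_right)
lemma B_uminus_left: "B (- a) c = - B a c"
proof -
  have "B a c + B (- a) c = 0" using B_add_left[of a "- a" c] by simp
  from minus_unique[OF this] show ?thesis by simp
qed
lemma B_diff_left: "B (a - b) c = B a c - B b c"
  using B_add_left[of a "- b" c] B_uminus_left[of b c] by simp
lemma B_uminus_right: "B c (- a) = - B c a"
proof -
  have "B c a + B c (- a) = 0" using B_add_right[of c a "- a"] by simp
  from minus_unique[OF this] show ?thesis by simp
qed
lemma B_diff_right: "B c (a - b) = B c a - B c b"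
  using B_add_right[of c a "- b"] B_uminus_right[of c b] by simp
lemma B_sum_left: "B (sum f A) c = (\<Sum>x\<in>A. B (f x) c)"
  by (induct A rule: infinite_finite_induct) (simp_all add: B_add_left)
lemma B_sum_right: "B c (sum f A) = (\<Sum>x\<in>A. B c (f x))"
  by (induct A rule: infinite_finite_induct) (simp_all add: B_add_right)

lemma B_one [simp]: "B 1 c = 0"
  using B_leib[of 1 1 c] by (metis mult_1 mult_1_right add_cancel_right_right)

lemma B_kconst [simp]: "B (kconst r) c = 0"
  using B_smult[of r 1 c] by simp

lemma kconst_2: "kconst (2::'a) = 2"
  using kconst_add[of 1 1] by (metis kconst_1 one_add_one)

lemma two_nz: "(2 :: 'a ratfun2) \<noteq> 0"
proof -
  have "kconst (2::'a) \<noteq> 0" by (simp only: kconst_eq_0_iff) simp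
  then show ?thesis by (metis kconst_2)
qed

lemma B_self [simp]: "B a a = 0"
proof -
  have h: "B a a = - B a a" by (rule B_antisym)
  have "2 * B a a = B a a + B a a" by (rule mult_2)
  also have "\<dots> = - B a a + B a a" using h by (rule arg_cong[where f="\<lambda>x. x + B a a"])
  also have "\<dots> = 0" by (rule left_minus)
  finally have "2 * B a a = 0" .
  then show ?thesis using two_nz by (simp only: mult_eq_0_iff) blast
qed

lemma B_inverse: "f \<noteq> 0 \<Longrightarrow> B (inverse f) g = - B f g / f ^ 2"
proof -
  assume f: "f \<noteq> 0"
  have "0 = B (f * inverse f) g" using f by simp
  also have "\<dots> = f * B (inverse f) g + B f g * inverse f" by (rule B_leib)
  finally have e: "f * B (inverse f) g = - (B f g * inverse f)"
    by (simp only: eq_neg_iff_add_eq_0)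
  have "B (inverse f) g = inverse f * (f * B (inverse f) g)" using f by (simp add: mult.assoc[symmetric])
  also have "\<dots> = inverse f * (- (B f g * inverse f))" by (simp only: e)
  also have "\<dots> = - B f g / f ^ 2" by (simp add: power2_eq_square divide_inverse)
  finally show ?thesis .
qed

lemma B_inverse_right: "b \<noteq> 0 \<Longrightarrow> B f (inverse b) = - B f b / b ^ 2"
proof -
  assume b: "b \<noteq> 0"
  have "B f (inverse b) = - B (inverse b) f" by (rule B_antisym)
  also have "\<dots> = B b f / b ^ 2" using B_inverse[OF b, of f] by simp
  also have "B b f = - B f b" by (rule B_antisym)
  finally show ?thesis by simp
qed

lemma B_divide_right: "b \<noteq> 0 \<Longrightarrow> B f (a / b) = (B f a * b - a * B f b) / b ^ 2"
proof -
  assume b: "b \<noteq> 0"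
  have "B f (a / b) = B f (a * inverse b)" by (simp add: divide_inverse)
  also have "\<dots> = a * B f (inverse b) + B f a * inverse b" by (rule B_leib_right)
  also have "\<dots> = a * (- B f b / b ^ 2) + B f a * inverse b" using B_inverse_right[OF b] by simp
  also have "\<dots> = (B f a * b - a * B f b) / b ^ 2" using b
    by (simp add: power2_eq_square field_simps)
  finally show ?thesis .
qed

definition L :: "'a ratfun2 \<Rightarrow> 'a ratfun2 \<Rightarrow> 'a ratfun2" where
  "L f g = B f g / (f * g)"

lemma B_L: "f \<noteq> 0 \<Longrightarrow> g \<noteq> 0 \<Longrightarrow> B f g = L f g * f * g"
  by (simp add: L_def)

lemma L_mult_left: "a \<noteq> 0 \<Longrightarrow> b \<noteq> 0 \<Longrightarrow> g \<noteq> 0 \<Longrightarrow> L (a * b) g = L a g + L b g"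
  by (simp add: L_def B_leib field_simps)

lemma L_antisym: "L f g = - L g f"
  unfolding L_def by (subst B_antisym[of f g]) (simp add: mult.commute)

lemma L_mult_right: "a \<noteq> 0 \<Longrightarrow> b \<noteq> 0 \<Longrightarrow> g \<noteq> 0 \<Longrightarrow> L g (a * b) = L g a + L g b"
  using L_mult_left[of a b g] L_antisym[of g "a * b"] L_antisym[of a g] L_antisym[of b g] by simp

lemma L_kconst [simp]: "L (kconst c) g = 0" by (simp add: L_def)

lemma L_one [simp]: "L 1 g = 0" by (simp add: L_def)

lemma L_power: "a \<noteq> 0 \<Longrightarrow> g \<noteq> 0 \<Longrightarrow> L (a ^ n) g = of_nat n * L a g"
proof (induct n)
  case (Suc n)
  then have "L (a ^ Suc n) g = L a g + L (a ^ n) g" using L_mult_left[of a "a ^ n" g] by simp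
  then show ?case using Suc by (simp add: algebra_simps)
qed simp

lemma L_inverse: "a \<noteq> 0 \<Longrightarrow> g \<noteq> 0 \<Longrightarrow> L (inverse a) g = - L a g"
proof -
  assume "a \<noteq> 0" "g \<noteq> 0"
  then have "L a g + L (inverse a) g = 0" using L_mult_left[of a "inverse a" g] by simp
  from minus_unique[OF this] show ?thesis by simp
qed

lemma L_divide_left: "a \<noteq> 0 \<Longrightarrow> b \<noteq> 0 \<Longrightarrow> g \<noteq> 0 \<Longrightarrow> L (a / b) g = L a g - L b g"
  by (simp add: divide_inverse L_mult_left L_inverse)

lemma L_divide_right: "a \<noteq> 0 \<Longrightarrow> b \<noteq> 0 \<Longrightarrow> g \<noteq> 0 \<Longrightarrow> L g (a / b) = L g a - L g b"
  using L_divide_left[of a b g] L_antisym[of a g] L_antisym[of b g] L_antisym[of g "a/b"]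
  by simp

lemma L_self [simp]: "L a a = 0" by (simp add: L_def)

end


lemma monoF_0 [simp]: "monoF 0 n i = 0" by (simp add: monoF_def)

lemma gef_const_int: "gef (kconst m * of_int N) 0"
  using gef_kconst[of "m * of_int N"] by (simp add: kconst_mult kconst_of_int)

lemma vf_monoF_divide:
  assumes "c \<noteq> 0" "c' \<noteq> 0"
  shows "monoF c n i / monoF c' n' i' \<noteq> 0"
  using vf_monoF[OF assms(1)] vf_monoF[OF assms(2)] by simp

context
  fixes B :: "'a::field_char_0 ratfun2 \<Rightarrow> 'a ratfun2 \<Rightarrow> 'a ratfun2" and m :: 'a
  assumes pb: "poisson_bracket B" and X12: "B X1 X2 = kconst m * X1 * X2"
begin

lemma L_X12: "L B X1 X2 = kconst m" using X12 by (simp add: L_def[OF pb])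
lemma L_X21: "L B X2 X1 = - kconst m" using L_antisym[OF pb, of X2 X1] L_X12 by simp
lemma L_X11: "L B X1 X1 = 0" using L_self[OF pb] .
lemma L_X22: "L B X2 X2 = 0" using L_self[OF pb] .

lemma L_monoF_left:
  assumes "c \<noteq> 0" "g \<noteq> 0"
  shows "L B (monoF c n i) g = of_nat i * L B X1 g + of_nat n * L B X2 g"
proof -
  have "L B (monoF c n i) g = L B (kconst c * X1 ^ i) g + L B (X2 ^ n) g"
    unfolding monoF_def using assms by (intro L_mult_left[OF pb]) auto
  also have "L B (kconst c * X1 ^ i) g = L B (kconst c) g + L B (X1 ^ i) g"
    using assms by (intro L_mult_left[OF pb]) auto
  finally show ?thesis using assms by (simp add: L_power[OF pb] L_kconst[OF pb])
qed

lemma L_monoF: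
  assumes "c \<noteq> 0" "c' \<noteq> 0"
  shows "L B (monoF c n i) (monoF c' n' i') = kconst m * of_int (int i * int n' - int n * int i')"
proof -
  have nz: "monoF c' n' i' \<noteq> 0" using vf_monoF(1)[OF assms(2)] .
  have a: "L B X1 (monoF c' n' i') = of_nat n' * kconst m"
    using L_antisym[OF pb, of X1 "monoF c' n' i'"] L_monoF_left[OF assms(2) X1_nz, of n' i']
    by (simp add: L_X11 L_X21)
  have b: "L B X2 (monoF c' n' i') = - (of_nat i' * kconst m)"
    using L_antisym[OF pb, of X2 "monoF c' n' i'"] L_monoF_left[OF assms(2) X2_nz, of n' i']
    by (simp add: L_X12 L_X22)
  show ?thesis using L_monoF_left[OF assms(1) nz, of n i] a b by (simp add: algebra_simps)
qed

lemma B_monoF: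
  "B (monoF c n i) (monoF c' n' i') =
     kconst m * of_int (int i * int n' - int n * int i') * (monoF c n i * monoF c' n' i')"
proof (cases "c = 0 \<or> c' = 0")
  case True then show ?thesis by (auto simp: B_zero_left[OF pb] B_zero_right[OF pb])
next
  case False
  then show ?thesis using B_L[OF pb, of "monoF c n i" "monoF c' n' i'"] L_monoF[of c c' n i n' i']
    vf_monoF(1)[of c] vf_monoF(1)[of c'] by (simp add: mult.assoc)
qed

lemma gef_B_monoF: "gef (B (monoF c n i) (monoF c' n' i')) ((int n, int i) + (int n', int i'))"
  unfolding B_monoF
  using gef_mult[OF gef_const_int[of m "int i * int n' - int n * int i'"] gef_mult[OF gef_monoF[of c n i] gef_monoF[of c' n' i']]]
  by (simp only: add_0_left)

lemma gef_B_poly: "gef (B (emb P) (emb R)) (vp P + vp R)"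
  unfolding emb_monoF_sum[of P] emb_monoF_sum[of R] B_sum_left[OF pb] B_sum_right[OF pb]
proof (intro gef_sum)
  fix x y assume x: "x \<in> supp2 P" and y: "y \<in> supp2 R"
  have le: "vp P + vp R \<le> ipair x + ipair y" using vp_le[OF x] vp_le[OF y] by (rule lex_add_mono)
  show "gef (B (monoF (coef2 P (fst x) (snd x)) (fst x) (snd x)) (monoF (coef2 R (fst y) (snd y)) (fst y) (snd y))) (vp P + vp R)"
    by (rule gef_mono[OF gef_B_monoF]) (use le in \<open>simp add: ipair_def\<close>)
qed

lemma vf_square: "y \<noteq> 0 \<Longrightarrow> vf (y ^ 2) = vf y + vf y"
  by (simp add: power2_eq_square vf_mult)

lemma gef_B_step1:
  assumes S: "S \<noteq> 0" and R: "R \<noteq> 0"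
  shows "gef (B (emb P) (emb R / emb S)) (vp P + vf (emb R / emb S))"
proof -
  have vg: "vf (emb R / emb S) = vp R - vp S" using S R by (simp add: vf_Fract flip: Fract_emb)
  have "gef (B (emb P) (emb R) * emb S - emb R * B (emb P) (emb S)) (vp P + vp R + vp S)"
  proof (rule gef_diff)
    have "gef (B (emb P) (emb R) * emb S) (vp P + vp R + vf (emb S))"
      by (rule gef_mult[OF gef_B_poly gef_vf])
    then show "gef (B (emb P) (emb R) * emb S) (vp P + vp R + vp S)"
      using S by (simp add: vf_emb)
    have "gef (emb R * B (emb P) (emb S)) (vf (emb R) + (vp P + vp S))"
      by (rule gef_mult[OF gef_vf gef_B_poly])
    moreover have "vf (emb R) + (vp P + vp S) = vp P + vp R + vp S" using R by (simp add: vf_emb algebra_simps)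
    ultimately show "gef (emb R * B (emb P) (emb S)) (vp P + vp R + vp S)" by simp
  qed
  from gef_divide[OF this, of "emb S ^ 2"]
  have G: "gef ((B (emb P) (emb R) * emb S - emb R * B (emb P) (emb S)) / emb S ^ 2)
           (vp P + vp R + vp S - vf (emb S ^ 2))" using S by simp
  have eq: "B (emb P) (emb R / emb S) = (B (emb P) (emb R) * emb S - emb R * B (emb P) (emb S)) / emb S ^ 2"
    by (rule B_divide_right[OF pb]) (simp add: S)
  have w: "vp P + vp R + vp S - vf (emb S ^ 2) = vp P + vf (emb R / emb S)"
    using S by (simp add: vg vf_square vf_emb algebra_simps)
  show ?thesis using G unfolding eq w .
qed

lemma gef_B:
  assumes f: "f \<noteq> 0" and g: "g \<noteq> 0"
  shows "gef (B f g) (vf f + vf g)"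
proof -
  obtain P Q where fP: "f = emb P / emb Q" "Q \<noteq> 0" "P \<noteq> 0"
    using f by (cases f rule: Fract_cases_nonzero) (auto simp: Fract_emb)
  obtain R S where gR: "g = emb R / emb S" "S \<noteq> 0" "R \<noteq> 0"
    using g by (cases g rule: Fract_cases_nonzero) (auto simp: Fract_emb)
  have vf: "vf f = vp P - vp Q" using fP by (simp add: vf_Fract flip: Fract_emb)
  have s1: "gef (B g (emb X)) (vp X + vf g)" for X
  proof -
    have "gef (- B (emb X) g) (vp X + vf g)"
      using gef_uminus[OF gef_B_step1[OF gR(2) gR(3), of X]] unfolding gR(1) .
    moreover have "- B (emb X) g = B g (emb X)" using B_antisym[OF pb, of g "emb X"] by simp
    ultimately show ?thesis by simp
  qed
  have "gef (B g (emb P) * emb Q - emb P * B g (emb Q)) (vp P + vf g + vp Q)"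
  proof (rule gef_diff)
    have "gef (B g (emb P) * emb Q) (vp P + vf g + vf (emb Q))" by (rule gef_mult[OF s1 gef_vf])
    then show "gef (B g (emb P) * emb Q) (vp P + vf g + vp Q)" using fP by (simp add: vf_emb)
    have "gef (emb P * B g (emb Q)) (vf (emb P) + (vp Q + vf g))" by (rule gef_mult[OF gef_vf s1])
    moreover have "vf (emb P) + (vp Q + vf g) = vp P + vf g + vp Q" using fP by (simp add: vf_emb algebra_simps)
    ultimately show "gef (emb P * B g (emb Q)) (vp P + vf g + vp Q)" by simp
  qed
  from gef_divide[OF this, of "emb Q ^ 2"]
  have G: "gef ((B g (emb P) * emb Q - emb P * B g (emb Q)) / emb Q ^ 2)
           (vp P + vf g + vp Q - vf (emb Q ^ 2))" using fP by simp
  have eq: "B g f = (B g (emb P) * emb Q - emb P * B g (emb Q)) / emb Q ^ 2"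
    unfolding fP(1) by (rule B_divide_right[OF pb]) (simp add: fP)
  have w: "vp P + vf g + vp Q - vf (emb Q ^ 2) = vf f + vf g"
    unfolding vf using fP(2,3) by (simp add: vf_square vf_emb algebra_simps)
  have "gef (B g f) (vf f + vf g)" using G unfolding eq w .
  from gef_uminus[OF this] show ?thesis using B_antisym[OF pb, of g f] by simp
qed

end


lemma vf_kconst: "c \<noteq> 0 \<Longrightarrow> vf (kconst c) = 0"
  using vf_monoF(2)[of c 0 0] by (simp add: monoF_def zero_prod_def)

lemma gef_kconst_mult: "gef x w \<Longrightarrow> gef (kconst c * x) w"
  using gef_mult[OF gef_kconst[of c]] by fastforce

context
  fixes B :: "'a::field_char_0 ratfun2 \<Rightarrow> 'a ratfun2 \<Rightarrow> 'a ratfun2" and m :: 'a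
  assumes pb: "poisson_bracket B" and X12: "B X1 X2 = kconst m * X1 * X2"
begin

lemma gef_B_gen: "gef f a \<Longrightarrow> gef g b \<Longrightarrow> gef (B f g) (a + b)"
proof -
  assume fa: "gef f a" and gb: "gef g b"
  show ?thesis
  proof (cases "f = 0 \<or> g = 0")
    case True then show ?thesis by (auto simp: B_zero_left[OF pb] B_zero_right[OF pb])
  next
    case False
    then have "a \<le> vf f" "b \<le> vf g" using fa gb by (auto simp: gef_def)
    then have "a + b \<le> vf f + vf g" by (rule lex_add_mono)
    then show ?thesis using gef_B[OF pb X12, of f g] False by (auto intro: gef_mono)
  qed
qed

lemma L_quot:
  assumes "c1 \<noteq> 0" "c2 \<noteq> 0" "c3 \<noteq> 0" "c4 \<noteq> 0"
  shows "L B (monoF c1 n1 i1 / monoF c2 n2 i2) (monoF c3 n3 i3 / monoF c4 n4 i4) =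
    kconst m * of_int ((int i1 * int n3 - int n1 * int i3) - (int i1 * int n4 - int n1 * int i4)
       - (int i2 * int n3 - int n2 * int i3) + (int i2 * int n4 - int n2 * int i4))"
proof -
  note nz = vf_monoF(1)[OF assms(1)] vf_monoF(1)[OF assms(2)] vf_monoF(1)[OF assms(3)] vf_monoF(1)[OF assms(4)]
  have "L B (monoF c1 n1 i1 / monoF c2 n2 i2) (monoF c3 n3 i3 / monoF c4 n4 i4) =
     L B (monoF c1 n1 i1) (monoF c3 n3 i3 / monoF c4 n4 i4) - L B (monoF c2 n2 i2) (monoF c3 n3 i3 / monoF c4 n4 i4)"
    using nz by (intro L_divide_left[OF pb]) auto
  also have "\<dots> = (L B (monoF c1 n1 i1) (monoF c3 n3 i3) - L B (monoF c1 n1 i1) (monoF c4 n4 i4))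
     - (L B (monoF c2 n2 i2) (monoF c3 n3 i3) - L B (monoF c2 n2 i2) (monoF c4 n4 i4))"
    using nz by (simp add: L_divide_right[OF pb])
  also have "\<dots> = kconst m * of_int ((int i1 * int n3 - int n1 * int i3) - (int i1 * int n4 - int n1 * int i4)
       - (int i2 * int n3 - int n2 * int i3) + (int i2 * int n4 - int n2 * int i4))"
    using assms by (simp add: L_monoF[OF pb X12] algebra_simps)
  finally show ?thesis .
qed

lemma ratio_int:
  assumes u: "u \<noteq> 0" and v: "v \<noteq> 0" and uv: "B u v = kconst l * u * v"
  shows "\<exists>N::int. l = m * of_int N"
proof -
  obtain c1 n1 i1 c2 n2 i2 where cu: "c1 \<noteq> 0" "c2 \<noteq> 0"
    and vtu: "vf (monoF c1 n1 i1 / monoF c2 n2 i2) = vf u"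
    and gru: "gef (u - monoF c1 n1 i1 / monoF c2 n2 i2) (vf u + (0,1))"
    using lead_frac[OF u] by blast
  obtain c3 n3 i3 c4 n4 i4 where cv: "c3 \<noteq> 0" "c4 \<noteq> 0"
    and vtv: "vf (monoF c3 n3 i3 / monoF c4 n4 i4) = vf v"
    and grv: "gef (v - monoF c3 n3 i3 / monoF c4 n4 i4) (vf v + (0,1))"
    using lead_frac[OF v] by blast
  define tu where "tu = monoF c1 n1 i1 / monoF c2 n2 i2"
  define tv where "tv = monoF c3 n3 i3 / monoF c4 n4 i4"
  define ru where "ru = u - tu"
  define rv where "rv = v - tv"
  define N where "N = ((int i1 * int n3 - int n1 * int i3) - (int i1 * int n4 - int n1 * int i4)
       - (int i2 * int n3 - int n2 * int i3) + (int i2 * int n4 - int n2 * int i4))"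
  have tu0: "tu \<noteq> 0" using vf_monoF_divide[OF cu] by (simp add: tu_def)
  have tv0: "tv \<noteq> 0" using vf_monoF_divide[OF cv] by (simp add: tv_def)
  have Ltt: "L B tu tv = kconst m * of_int N"
    unfolding tu_def tv_def N_def by (rule L_quot[OF cu cv])
  have Btt: "B tu tv = kconst m * of_int N * tu * tv"
    using B_L[OF pb tu0 tv0] Ltt by simp
  have gtu: "gef tu (vf u)" using vtu gef_vf[of tu] by (simp add: tu_def)
  have gtv: "gef tv (vf v)" using vtv gef_vf[of tv] by (simp add: tv_def)
  have gru': "gef ru (vf u + (0,1))" using gru by (simp add: ru_def tu_def)
  have grv': "gef rv (vf v + (0,1))" using grv by (simp add: rv_def tv_def)
  have ue: "u = tu + ru" and ve: "v = tv + rv" by (simp_all add: ru_def rv_def)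
  define w where "w = vf u + vf v + (0,1)"
  have w1: "vf u + (vf v + (0,1)) = w" and w2: "vf u + (0,1) + vf v = w"
    by (simp_all add: w_def algebra_simps)
  have w3: "w \<le> vf u + (0,1) + (vf v + (0,1))"
    unfolding w_def by (cases "vf u"; cases "vf v") auto
  define E where "E = (B tu rv + B ru tv + B ru rv) - kconst l * (tu * rv + ru * tv + ru * rv)"
  have gE: "gef E w"
  proof -
    have a: "gef (B tu rv) w" using gef_B_gen[OF gtu grv'] w1 by simp
    have b: "gef (B ru tv) w" using gef_B_gen[OF gru' gtv] w2 by simp
    have c: "gef (B ru rv) w" using gef_mono[OF gef_B_gen[OF gru' grv'] w3] .
    have d: "gef (tu * rv) w" using gef_mult[OF gtu grv'] w1 by simp
    have e: "gef (ru * tv) w" using gef_mult[OF gru' gtv] w2 by simp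
    have f: "gef (ru * rv) w" using gef_mono[OF gef_mult[OF gru' grv'] w3] .
    show ?thesis unfolding E_def
      by (intro gef_diff gef_add gef_kconst_mult a b c d e f)
  qed
  have Buv: "B u v = B tu tv + B tu rv + B ru tv + B ru rv"
    unfolding ue ve by (simp add: B_add_left[OF pb] B_add_right[OF pb])
  have key: "kconst (l - m * of_int N) * (tu * tv) = E"
  proof -
    have "kconst l * u * v = kconst l * (tu * tv) + kconst l * (tu * rv + ru * tv + ru * rv)"
      unfolding ue ve by (simp add: algebra_simps)
    moreover have "kconst (l - m * of_int N) * (tu * tv) = kconst l * (tu * tv) - kconst m * of_int N * tu * tv"
      by (simp add: kconst_diff kconst_mult kconst_of_int algebra_simps)
    ultimately show ?thesis using uv Buv Btt unfolding E_def
      by (metis (no_types, lifting) add.assoc add_diff_cancel_left' diff_add_eq diff_diff_eq2 mult.assoc)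
  qed
  show ?thesis
  proof (rule ccontr)
    assume "\<not> ?thesis"
    then have lnz: "l - m * of_int N \<noteq> 0" by auto
    have nz: "kconst (l - m * of_int N) * (tu * tv) \<noteq> 0" using lnz tu0 tv0 by simp
    have "vf (kconst (l - m * of_int N) * (tu * tv)) = vf u + vf v"
    proof -
      have "vf tu = vf u" "vf tv = vf v" using vtu vtv by (simp_all add: tu_def tv_def)
      then show ?thesis using lnz tu0 tv0 by (simp add: vf_mult vf_kconst)
    qed
    then have "\<not> gef (kconst (l - m * of_int N) * (tu * tv)) w"
      using gef_strict_nz[OF nz] by (simp add: w_def)
    then show False using gE key by simp
  qed
qed

end


lemma deriv_zero:
  fixes d :: "'a::field_char_0 ratfun2 \<Rightarrow> 'a ratfun2"
  assumes add: "\<And>a b. d (a + b) = d a + d b"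
    and leib: "\<And>a b. d (a * b) = a * d b + d a * b"
    and dk: "\<And>c. d (kconst c) = 0" and d1: "d X1 = 0" and d2: "d X2 = 0"
  shows "d f = 0"
proof -
  have d0: "d 0 = 0" using add[of 0 0] by (metis add_0 add_cancel_right_right)
  have dsum: "d (sum g A) = (\<Sum>x\<in>A. d (g x))" for g :: "'b \<Rightarrow> _" and A
    by (induct A rule: infinite_finite_induct) (simp_all add: d0 add)
  have dpow: "d x = 0 \<Longrightarrow> d (x ^ n) = 0" for x n
    by (induct n) (simp_all add: leib dk[of 1, simplified])
  have dmono: "d (monoF c n i) = 0" for c n i
    unfolding monoF_def by (simp add: leib dk dpow d1 d2)
  have demb: "d (emb P) = 0" for P
    unfolding emb_monoF_sum[of P] dsum by (simp add: dmono)
  obtain P Q where f: "f = emb P / emb Q" "Q \<noteq> 0"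
    by (cases f) (auto simp: Fract_emb)
  have "0 = d (f * emb Q)" using f demb by simp
  also have "\<dots> = f * d (emb Q) + d f * emb Q" by (rule leib)
  finally show ?thesis using f demb by simp
qed

lemma bracket_unique:
  fixes B1 B2 :: "'a::field_char_0 ratfun2 \<Rightarrow> 'a ratfun2 \<Rightarrow> 'a ratfun2"
  assumes p1: "poisson_bracket B1" and p2: "poisson_bracket B2" and e: "B1 X1 X2 = B2 X1 X2"
  shows "B1 = B2"
proof -
  define D where "D a b = B1 a b - B2 a b" for a b
  have Dl_add: "D (a + b) c = D a c + D b c" for a b c
    by (simp add: D_def B_add_left[OF p1] B_add_left[OF p2])
  have Dl_leib: "D (a * b) c = a * D b c + D a c * b" for a b c
    by (simp add: D_def B_leib[OF p1] B_leib[OF p2] algebra_simps)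
  have Dr_add: "D c (a + b) = D c a + D c b" for a b c
    by (simp add: D_def B_add_right[OF p1] B_add_right[OF p2])
  have Dr_leib: "D a (b * c) = b * D a c + D a b * c" for a b c
    by (simp add: D_def B_leib_right[OF p1] B_leib_right[OF p2] algebra_simps)
  have Danti: "D a b = - D b a" for a b
    using B_antisym[OF p1, of a b] B_antisym[OF p2, of a b] by (simp add: D_def)
  have D12: "D X1 X2 = 0" using e by (simp add: D_def)
  have D21: "D X2 X1 = 0" using Danti[of X2 X1] D12 by simp
  have DX: "D f X1 = 0 \<and> D f X2 = 0" for f
  proof
    show "D f X1 = 0"
      by (rule deriv_zero[of "\<lambda>f. D f X1"])
         (simp_all add: Dl_add Dl_leib D21, simp_all add: D_def B_kconst[OF p1] B_kconst[OF p2]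
            B_self[OF p1] B_self[OF p2])
    show "D f X2 = 0"
      by (rule deriv_zero[of "\<lambda>f. D f X2"])
         (simp_all add: Dl_add Dl_leib D12, simp_all add: D_def B_kconst[OF p1] B_kconst[OF p2]
            B_self[OF p1] B_self[OF p2])
  qed
  have "D f g = 0" for f g
  proof (rule deriv_zero[of "D f"])
    show "D f (kconst c) = 0" for c
      using Danti[of f "kconst c"] by (simp add: D_def B_kconst[OF p1] B_kconst[OF p2])
  qed (simp_all add: Dr_add Dr_leib DX)
  then show ?thesis by (intro ext) (simp add: D_def)
qed

lemma poisson_iso_inv:
  assumes "poisson_iso B C \<phi>"
  shows "poisson_iso C B (inv \<phi>)"
proof -
  have b: "bij \<phi>" and add: "\<And>a b. \<phi> (a + b) = \<phi> a + \<phi> b" and mul: "\<And>a b. \<phi> (a * b) = \<phi> a * \<phi> b"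
    and one: "\<phi> 1 = 1" and sm: "\<And>r a. \<phi> (kconst r * a) = kconst r * \<phi> a"
    and br: "\<And>a b. \<phi> (B a b) = C (\<phi> a) (\<phi> b)"
    using assms by (auto simp: poisson_iso_def)
  define \<psi> where "\<psi> = inv \<phi>"
  have r: "\<phi> (\<psi> x) = x" for x using b by (simp add: \<psi>_def bij_is_surj surj_f_inv_f)
  have l: "\<psi> (\<phi> x) = x" for x using b by (simp add: \<psi>_def bij_is_inj)
  have "bij \<psi>" unfolding \<psi>_def using b by (rule bij_imp_bij_inv)
  moreover have "\<psi> (a + b) = \<psi> a + \<psi> b" for a b
    by (metis add l r)
  moreover have "\<psi> (a * b) = \<psi> a * \<psi> b" for a b
    by (metis mul l r)
  moreover have "\<psi> 1 = 1" by (metis one l)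
  moreover have "\<psi> (kconst r * a) = kconst r * \<psi> a" for r a
    by (metis sm l r)
  moreover have "\<psi> (C a b) = B (\<psi> a) (\<psi> b)" for a b
    by (metis br l r)
  ultimately show ?thesis unfolding \<psi>_def poisson_iso_def by blast
qed


lemma coef2_ext: "(\<And>n i. coef2 P n i = coef2 Q n i) \<Longrightarrow> P = Q"
  by (intro poly_eqI) (simp add: coef2_def)

definition swapP :: "'a::comm_ring_1 poly poly \<Rightarrow> 'a poly poly" where
  "swapP P = (\<Sum>x\<in>supp2 P. monoP (coef2 P (fst x) (snd x)) (snd x) (fst x))"

lemma coef2_swapP [simp]: "coef2 (swapP P) n i = coef2 P i n"
proof -
  have "coef2 (swapP P) n i = (\<Sum>x\<in>supp2 P. if x = (i, n) then coef2 P i n else 0)"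
    unfolding swapP_def coef2_sum by (intro sum.cong) (auto simp: coef2_monoP)
  also have "\<dots> = coef2 P i n"
    using finite_supp2[of P] by (simp add: sum.delta' supp2_def)
  finally show ?thesis .
qed

lemma swapP_swapP [simp]: "swapP (swapP P) = P" by (rule coef2_ext) simp

lemma coef2_add [simp]: "coef2 (P + Q) n i = coef2 P n i + coef2 Q n i" by (simp add: coef2_def)

lemma swapP_add: "swapP (P + Q) = swapP P + swapP Q" by (rule coef2_ext) simp

lemma swapP_mult: "swapP (P * Q) = swapP P * swapP (Q :: 'a::comm_ring_1 poly poly)"
proof (rule coef2_ext)
  fix n i
  have "coef2 (swapP (P * Q)) n i = (\<Sum>j\<le>i. \<Sum>k\<le>n. coef2 P j k * coef2 Q (i - j) (n - k))"
    by (simp add: coef2_mult)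
  also have "\<dots> = (\<Sum>k\<le>n. \<Sum>j\<le>i. coef2 P j k * coef2 Q (i - j) (n - k))"
    by (rule sum.swap)
  also have "\<dots> = coef2 (swapP P * swapP Q) n i"
    by (simp add: coef2_mult)
  finally show "coef2 (swapP (P * Q)) n i = coef2 (swapP P * swapP Q) n i" .
qed

lemma swapP_monoP: "swapP (monoP c n i) = monoP c i n"
  by (rule coef2_ext) (auto simp: coef2_monoP)

lemma monoP_const: "monoP c 0 0 = [:[:c:]:]" by (simp add: monoP_def monom_0)
lemma monoP_X1: "monoP 1 0 1 = [:[:0, 1:]:]" by (simp add: monoP_def monom_0 monom_Suc)
lemma monoP_X2: "monoP 1 1 0 = ([:0, 1:] :: 'a::comm_ring_1 poly poly)"
  by (simp add: monoP_def monom_0 monom_Suc pCons_one)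

lemma swapP_const: "swapP [:[:c:]:] = [:[:c:]:]"
  using swapP_monoP[of c 0 0] by (simp add: monoP_const)
lemma swapP_X1: "swapP [:[:0, 1:]:] = ([:0, 1:] :: 'a::comm_ring_1 poly poly)"
  using swapP_monoP[of "1::'a" 0 1] unfolding monoP_X1 monoP_X2 .
lemma swapP_X2: "swapP [:0, 1:] = ([:[:0, 1:]:] :: 'a::comm_ring_1 poly poly)"
  using swapP_monoP[of "1::'a" 1 0] unfolding monoP_X1 monoP_X2 .

lemma swapP_0 [simp]: "swapP 0 = 0" by (rule coef2_ext) (simp only: coef2_swapP, simp add: coef2_def)
lemma swapP_eq_0_iff [simp]: "swapP P = 0 \<longleftrightarrow> P = 0"
  by (metis swapP_0 swapP_swapP)

definition sw :: "'a::idom ratfun2 \<Rightarrow> 'a ratfun2" where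
  "sw f = (let pq = (SOME pq. snd pq \<noteq> 0 \<and> f = Fract (fst pq) (snd pq))
           in Fract (swapP (fst pq)) (swapP (snd pq)))"

lemma sw_Fract:
  fixes P Q :: "'a::idom poly poly"
  assumes Q: "Q \<noteq> 0" shows "sw (Fract P Q) = Fract (swapP P) (swapP Q)"
proof -
  define pq where "pq = (SOME pq. snd pq \<noteq> 0 \<and> Fract P Q = Fract (fst pq) (snd pq))"
  have "\<exists>pq. snd pq \<noteq> 0 \<and> Fract P Q = Fract (fst pq) (snd pq)" using Q by (intro exI[of _ "(P, Q)"]) auto
  then have h: "snd pq \<noteq> 0 \<and> Fract P Q = Fract (fst pq) (snd pq)" unfolding pq_def by (rule someI_ex)
  then have h1: "snd pq \<noteq> 0" and h2: "Fract P Q = Fract (fst pq) (snd pq)" by auto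
  then have "P * snd pq = fst pq * Q" using eq_fract(1)[OF Q h1] by simp
  then have "swapP P * swapP (snd pq) = swapP (fst pq) * swapP Q" by (simp flip: swapP_mult)
  then have "Fract (swapP (fst pq)) (swapP (snd pq)) = Fract (swapP P) (swapP Q)"
    using eq_fract(1)[of "swapP (snd pq)" "swapP Q"] h1 Q by simp
  then show ?thesis unfolding sw_def pq_def[symmetric] by simp
qed

lemma sw_add: "sw (f + g) = sw f + sw (g :: 'a::idom ratfun2)"
proof -
  obtain P Q where f: "f = Fract P Q" "Q \<noteq> 0" by (cases f)
  obtain R S where g: "g = Fract R S" "S \<noteq> 0" by (cases g)
  show ?thesis using f g by (simp add: sw_Fract swapP_add swapP_mult)
qed

lemma sw_mult: "sw (f * g) = sw f * sw (g :: 'a::idom ratfun2)"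
proof -
  obtain P Q where f: "f = Fract P Q" "Q \<noteq> 0" by (cases f)
  obtain R S where g: "g = Fract R S" "S \<noteq> 0" by (cases g)
  show ?thesis using f g by (simp add: sw_Fract swapP_mult)
qed

lemma sw_sw [simp]: "sw (sw f) = (f :: 'a::idom ratfun2)"
  by (cases f) (simp add: sw_Fract)

lemma sw_emb: "sw (emb P) = emb (swapP P)"
  by (simp add: emb_def sw_Fract swapP_const[of 1, simplified pCons_one])

lemma sw_1: "sw 1 = (1 :: 'a::idom ratfun2)"
  using sw_emb[of 1] swapP_const[of 1] by (metis emb_1 pCons_one)

lemma sw_kconst: "sw (kconst c) = kconst c"
  by (simp add: kconst_emb sw_emb swapP_const)

lemma sw_X1: "sw X1 = X2" by (simp add: X1_def X2_def emb_def[symmetric] sw_emb swapP_X1)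
lemma sw_X2: "sw X2 = X1" by (simp add: X1_def X2_def emb_def[symmetric] sw_emb swapP_X2)

lemma sw_0: "sw 0 = (0 :: 'a::idom ratfun2)" using sw_emb[of 0] by simp

lemma sw_uminus: "sw (- f) = - sw (f :: 'a::idom ratfun2)"
proof -
  have "sw f + sw (- f) = 0" using sw_add[of f "- f"] sw_0 by (metis add.right_inverse)
  from minus_unique[OF this] show ?thesis by simp
qed

lemma bij_sw: "bij (sw :: 'a::idom ratfun2 \<Rightarrow> _)"
  by (rule bijI') (metis sw_sw, metis sw_sw)


lemma swap_iso:
  fixes l m :: "'a::field_char_0"
    and Bl Bm :: "'a ratfun2 \<Rightarrow> 'a ratfun2 \<Rightarrow> 'a ratfun2"
  assumes ql: "quantum_bracket l Bl" and qm: "quantum_bracket m Bm" and lm: "l = - m"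
  shows "poisson_iso Bl Bm sw"
proof -
  have pl: "poisson_bracket Bl" and Xl: "Bl X1 X2 = kconst l * X1 * X2"
    using ql by (auto simp: quantum_bracket_def)
  have pm: "poisson_bracket Bm" and Xm: "Bm X1 X2 = kconst m * X1 * X2"
    using qm by (auto simp: quantum_bracket_def)
  have Jm: "Bm a (Bm b c) + Bm b (Bm c a) + Bm c (Bm a b) = 0" for a b c
    using pm unfolding poisson_bracket_def by blast
  define C where "C a b = sw (Bm (sw a) (sw b))" for a b
  have pC: "poisson_bracket C"
    unfolding poisson_bracket_def
  proof (intro conjI allI)
    fix a b c r
    show "C (a + b) c = C a c + C b c"
      by (simp add: C_def sw_add B_add_left[OF pm])
    show "C (kconst r * a) b = kconst r * C a b"
      by (simp add: C_def sw_mult sw_kconst B_smult[OF pm])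
    show "C a b = - C b a"
      by (simp add: C_def sw_uminus B_antisym[OF pm, of "sw a" "sw b"])
    have "C a (C b c) + C b (C c a) + C c (C a b) =
          sw (Bm (sw a) (Bm (sw b) (sw c)) + Bm (sw b) (Bm (sw c) (sw a)) + Bm (sw c) (Bm (sw a) (sw b)))"
      by (simp add: C_def sw_add)
    also have "\<dots> = 0" by (simp add: Jm sw_0)
    finally show "C a (C b c) + C b (C c a) + C c (C a b) = 0" .
    show "C (a * b) c = a * C b c + C a c * b"
      by (simp add: C_def sw_mult sw_add B_leib[OF pm])
  qed
  have "C X1 X2 = sw (Bm X2 X1)" by (simp add: C_def sw_X1 sw_X2)
  also have "Bm X2 X1 = - (kconst m * X1 * X2)" using B_antisym[OF pm, of X2 X1] Xm by simp
  also have "sw (- (kconst m * X1 * X2)) = kconst l * X1 * X2"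
    by (simp add: sw_uminus sw_mult sw_kconst sw_X1 sw_X2 lm kconst_uminus algebra_simps)
  finally have "C X1 X2 = Bl X1 X2" using Xl by simp
  then have CB: "C = Bl" by (intro bracket_unique[OF pC pl])
  show ?thesis unfolding poisson_iso_def
  proof (intro conjI allI)
    fix a b r
    show "sw (Bl a b) = Bm (sw a) (sw b)" by (simp add: CB[symmetric] C_def)
  qed (simp_all add: bij_sw sw_add sw_mult sw_1 sw_kconst)
qed

theorem corollary5p4:
  fixes l m :: "'a::field_char_0"
    and Bl Bm :: "'a ratfun2 \<Rightarrow> 'a ratfun2 \<Rightarrow> 'a ratfun2"
  assumes "quantum_bracket l Bl" and "quantum_bracket m Bm"
  shows "(\<exists>\<phi>. poisson_iso Bl Bm \<phi>) \<longleftrightarrow> (l = m \<or> l = - m)"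
proof
  have pl: "poisson_bracket Bl" and Xl: "Bl X1 X2 = kconst l * X1 * X2"
    using assms(1) by (auto simp: quantum_bracket_def)
  have pm: "poisson_bracket Bm" and Xm: "Bm X1 X2 = kconst m * X1 * X2"
    using assms(2) by (auto simp: quantum_bracket_def)
  have step: "\<exists>N::int. l' = m' * of_int N"
    if p': "poisson_bracket B'" "B' X1 X2 = kconst l' * X1 * X2"
      and q': "poisson_bracket C'" "C' X1 X2 = kconst m' * X1 * X2"
      and iso: "poisson_iso B' C' \<phi>"
    for B' C' :: "'a ratfun2 \<Rightarrow> 'a ratfun2 \<Rightarrow> 'a ratfun2" and l' m' :: 'a and \<phi>
  proof -
    have b: "bij \<phi>" and add: "\<And>a b. \<phi> (a + b) = \<phi> a + \<phi> b" and mul: "\<And>a b. \<phi> (a * b) = \<phi> a * \<phi> b"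
      and sm: "\<And>r a. \<phi> (kconst r * a) = kconst r * \<phi> a"
      and br: "\<And>a b. \<phi> (B' a b) = C' (\<phi> a) (\<phi> b)"
      using iso by (auto simp: poisson_iso_def)
    have z: "\<phi> 0 = 0" using add[of 0 0] by (metis add_0 add_cancel_right_right)
    have nz: "\<phi> x \<noteq> 0" if "x \<noteq> 0" for x
      using that z b by (metis bij_is_inj inj_eq)
    have "C' (\<phi> X1) (\<phi> X2) = \<phi> (kconst l' * (X1 * X2))" using br[of X1 X2] p'(2) by (simp add: mult.assoc)
    also have "\<dots> = kconst l' * \<phi> X1 * \<phi> X2" by (subst sm) (simp add: mul mult.assoc)
    finally show ?thesis using ratio_int[OF q' nz[OF X1_nz] nz[OF X2_nz]] by blast
  qed
  assume "\<exists>\<phi>. poisson_iso Bl Bm \<phi>"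
  then obtain \<phi> where iso: "poisson_iso Bl Bm \<phi>" by blast
  obtain N :: int where N: "l = m * of_int N" using step[OF pl Xl pm Xm iso] by blast
  obtain N' :: int where N': "m = l * of_int N'" using step[OF pm Xm pl Xl poisson_iso_inv[OF iso]] by blast
  show "l = m \<or> l = - m"
  proof (cases "l = 0")
    case True then show ?thesis using N' by simp
  next
    case False
    have "l = l * of_int (N' * N)" using N N' by (simp add: mult.assoc)
    then have "of_int (N' * N) = (1::'a)" using False by (metis mult_cancel_left1)
    then have "N' * N = 1" by (metis of_int_eq_1_iff)
    then have "N = 1 \<or> N = -1" by (auto simp: zmult_eq_1_iff)
    then show ?thesis using N by auto
  qed
next
  have pl: "poisson_bracket Bl" and Xl: "Bl X1 X2 = kconst l * X1 * X2"
    using assms(1) by (auto simp: quantum_bracket_def)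
  have pm: "poisson_bracket Bm" and Xm: "Bm X1 X2 = kconst m * X1 * X2"
    using assms(2) by (auto simp: quantum_bracket_def)
  assume "l = m \<or> l = - m"
  then show "\<exists>\<phi>. poisson_iso Bl Bm \<phi>"
  proof
    assume "l = m"
    then have "Bl = Bm" using bracket_unique[OF pl pm] Xl Xm by simp
    then have "poisson_iso Bl Bm id" by (simp add: poisson_iso_def)
    then show ?thesis by blast
  next
    assume "l = - m"
    then show ?thesis using swap_iso[OF assms] by blast
  qed
qed


end
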